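(* Let $E$ be a complete end of revolution in the hyperbolic space $\mathbb{H}^3$ which is contained in a compact subset of $\mathbb{H}^3$. Then $E$ is a parabolic end.
   Context: A complete end of revolution in $\mathbb{H}^3$: take a geodesic $\sigma$, a totally geodesic plane containing it, and a smooth regular curve $\beta:[0,\infty)\to$ that plane, of infinite length and not meeting $\sigma$; $E$ is the union of the images of $\beta$ under all rotations of $\mathbb{H}^3$ about $\sigma$ (orientation-preserving isometries fixing $\sigma$ pointwise), with the metric induced by the immersion $(t,\theta)\mapsto R_\theta(\beta(t))$ of $[0,\infty)\times\mathbb{S}^1$. An end is parabolic if every bounded harmonic function on it is determined by its boundary values. *)

theory Defs
  imports "HOL-Analysis.Analysis"
begin

definition mink :: "real^4 \<Rightarrow> real^4 \<Rightarrow> real" where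
  "mink x y = - (x$0 * y$0) + x$1 * y$1 + x$2 * y$2 + x$3 * y$3"

definition H3 :: "(real^4) set" where
  "H3 = {x. mink x x = -1 \<and> x$0 > 0}"

definition hgeodesic :: "(real^4) set \<Rightarrow> bool" where
  "hgeodesic S \<longleftrightarrow> (\<exists>V. subspace V \<and> dim V = 2 \<and> S = H3 \<inter> V) \<and> S \<noteq> {}"

definition hplane :: "(real^4) set \<Rightarrow> bool" where
  "hplane S \<longleftrightarrow> (\<exists>W. subspace W \<and> dim W = 3 \<and> S = H3 \<inter> W) \<and> S \<noteq> {}"

definition hisometry :: "(real^4 \<Rightarrow> real^4) \<Rightarrow> bool" where
  "hisometry f \<longleftrightarrow> linear f \<and> (\<forall>x y. mink (f x) (f y) = mink x y) \<and> f ` H3 \<subseteq> H3"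

definition hrotation_about :: "(real^4) set \<Rightarrow> (real^4 \<Rightarrow> real^4) \<Rightarrow> bool" where
  "hrotation_about \<sigma> f \<longleftrightarrow> hisometry f \<and> det (matrix f) > 0 \<and> (\<forall>x\<in>\<sigma>. f x = x)"

text \<open>Parametrisation of the rotations about \<sigma> by the angle: a continuous one-parameter
  group of rotations about \<sigma> with kernel exactly 2\<pi>\<int> (i.e. rotation by angle \<theta>,
  for one of the two orientations).\<close>
definition angle_param :: "(real^4) set \<Rightarrow> (real \<Rightarrow> real^4 \<Rightarrow> real^4) \<Rightarrow> bool" where
  "angle_param \<sigma> R \<longleftrightarrow>
     (\<forall>\<theta>. hrotation_about \<sigma> (R \<theta>)) \<and>
     (\<forall>a b. R (a + b) = R a \<circ> R b) \<and>
     (\<forall>\<theta>. R \<theta> = id \<longleftrightarrow> (\<exists>k::int. \<theta> = 2 * pi * of_int k)) \<and>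
     (\<forall>x. continuous_on UNIV (\<lambda>\<theta>. R \<theta> x))"

fun Ck_halfline :: "nat \<Rightarrow> (real \<Rightarrow> 'a::real_normed_vector) \<Rightarrow> bool" where
  "Ck_halfline 0 g = continuous_on {0..} g"
| "Ck_halfline (Suc k) g = ((\<forall>t\<ge>0. g differentiable (at t within {0..})) \<and>
      Ck_halfline k (\<lambda>t. vector_derivative g (at t within {0..})))"

definition smooth_halfline :: "(real \<Rightarrow> 'a::real_normed_vector) \<Rightarrow> bool" where
  "smooth_halfline g \<longleftrightarrow> (\<forall>k. Ck_halfline k g)"

definition dt :: "(real \<times> real \<Rightarrow> 'a::real_normed_vector) \<Rightarrow> real \<times> real \<Rightarrow> 'a" where
  "dt f x = vector_derivative (\<lambda>s. f (s, snd x)) (at (fst x))"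

definition d\<theta> :: "(real \<times> real \<Rightarrow> 'a::real_normed_vector) \<Rightarrow> real \<times> real \<Rightarrow> 'a" where
  "d\<theta> f x = vector_derivative (\<lambda>s. f (fst x, s)) (at (snd x))"

fun Ck_on :: "nat \<Rightarrow> (real \<times> real) set \<Rightarrow> (real \<times> real \<Rightarrow> 'a::real_normed_vector) \<Rightarrow> bool" where
  "Ck_on 0 S f = continuous_on S f"
| "Ck_on (Suc k) S f = ((\<forall>x\<in>S. (\<lambda>s. f (s, snd x)) differentiable (at (fst x)) \<and>
                                 (\<lambda>s. f (fst x, s)) differentiable (at (snd x))) \<and>
      Ck_on k S (dt f) \<and> Ck_on k S (d\<theta> f))"

text \<open>The immersion (t,\<theta>) \<mapsto> R_\<theta>(\<beta>(t)) of [0,\<infinity>) \<times> S^1 (\<theta> taken mod 2\<pi>).\<close>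
definition rev_imm :: "(real \<Rightarrow> real^4 \<Rightarrow> real^4) \<Rightarrow> (real \<Rightarrow> real^4) \<Rightarrow> real \<times> real \<Rightarrow> real^4" where
  "rev_imm R \<beta> x = R (snd x) (\<beta> (fst x))"

definition g11 where "g11 F x = mink (dt F x) (dt F x)"
definition g12 where "g12 F x = mink (dt F x) (d\<theta> F x)"
definition g22 where "g22 F x = mink (d\<theta> F x) (d\<theta> F x)"
definition gdet where "gdet F x = g11 F x * g22 F x - (g12 F x)^2"

text \<open>Laplace--Beltrami operator (times sqrt det g) in coordinates:
  \<Delta>_g u = (1/sqrt det g) \<partial>_i (sqrt det g g^{ij} \<partial>_j u).\<close>
definition lb_flux_t where
  "lb_flux_t F u x = (g22 F x * dt u x - g12 F x * d\<theta> u x) / sqrt (gdet F x)"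
definition lb_flux_\<theta> where
  "lb_flux_\<theta> F u x = (g11 F x * d\<theta> u x - g12 F x * dt u x) / sqrt (gdet F x)"

definition interior_E :: "(real \<times> real) set" where
  "interior_E = {x. fst x > 0}"

definition harmonic_on_E :: "(real \<times> real \<Rightarrow> real^4) \<Rightarrow> (real \<times> real \<Rightarrow> real) \<Rightarrow> bool" where
  "harmonic_on_E F u \<longleftrightarrow> Ck_on 2 interior_E u \<and>
     (\<forall>x\<in>interior_E. dt (lb_flux_t F u) x + d\<theta> (lb_flux_\<theta> F u) x = 0)"

text \<open>Bounded harmonic functions on E = [0,\<infinity>) \<times> S^1, continuous up to the boundary
  {0} \<times> S^1 (functions on S^1 = 2\<pi>-periodic functions).\<close>
definition bdd_harmonic_E :: "(real \<times> real \<Rightarrow> real^4) \<Rightarrow> (real \<times> real \<Rightarrow> real) \<Rightarrow> bool" where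
  "bdd_harmonic_E F u \<longleftrightarrow>
     (\<forall>t \<theta>. u (t, \<theta> + 2 * pi) = u (t, \<theta>)) \<and>
     continuous_on {x. fst x \<ge> 0} u \<and>
     (\<exists>B. \<forall>x. fst x \<ge> 0 \<longrightarrow> \<bar>u x\<bar> \<le> B) \<and>
     harmonic_on_E F u"

definition parabolic_end :: "(real \<times> real \<Rightarrow> real^4) \<Rightarrow> bool" where
  "parabolic_end F \<longleftrightarrow>
     (\<forall>u v. bdd_harmonic_E F u \<and> bdd_harmonic_E F v \<and> (\<forall>\<theta>. u (0, \<theta>) = v (0, \<theta>))
        \<longrightarrow> (\<forall>x. fst x \<ge> 0 \<longrightarrow> u x = v x))"

end

theory Submission
  imports Defs
begin


lemma lin_bound_basis:
  fixes L :: "real^4 \<Rightarrow> real^4"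
  assumes "linear L" and "\<And>i. norm (L (axis i 1)) \<le> e"
  shows "norm (L x) \<le> 4 * e * norm x"
proof -
  have "L x = (\<Sum>i\<in>UNIV. x$i *\<^sub>R L (axis i 1))"
  proof -
    have "L x = L (\<Sum>i\<in>UNIV. x$i *s axis i 1)" by (simp add: basis_expansion)
    also have "\<dots> = (\<Sum>i\<in>UNIV. x$i *\<^sub>R L (axis i 1))"
      using assms(1) by (simp add: linear_sum linear_scale scalar_mult_eq_scaleR)
    finally show ?thesis .
  qed
  also have "norm \<dots> \<le> (\<Sum>i\<in>(UNIV::4 set). norm (x$i *\<^sub>R L (axis i 1)))"
    by (rule norm_sum)
  also have "\<dots> \<le> (\<Sum>i\<in>(UNIV::4 set). norm x * e)"
  proof (rule sum_mono)
    fix i :: 4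
    have "norm (x$i *\<^sub>R L (axis i 1)) = \<bar>x$i\<bar> * norm (L (axis i 1))" by simp
    also have "\<dots> \<le> norm x * e"
      by (rule mult_mono) (auto simp: component_le_norm_cart assms(2))
    finally show "norm (x$i *\<^sub>R L (axis i 1)) \<le> norm x * e" .
  qed
  also have "\<dots> = 4 * e * norm x" by simp
  finally show ?thesis .
qed

lemma small_time:
  fixes R :: "real \<Rightarrow> real^4 \<Rightarrow> real^4"
  assumes lin: "\<And>\<theta>. linear (R \<theta>)" and R0: "R 0 = id"
   and cont: "\<And>x. continuous_on UNIV (\<lambda>\<theta>. R \<theta> x)"
  shows "\<exists>h>0. \<forall>s\<in>{0..h}. \<forall>x. norm (R s x - x) \<le> norm x / 2"
proof -
  have "\<forall>\<^sub>F s in at 0. \<forall>i. dist (R s (axis i 1)) (axis i 1) < 1/8"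
  proof (rule eventually_all_finite)
    fix i :: 4
    have "((\<lambda>s. R s (axis i 1)) \<longlongrightarrow> R 0 (axis i 1)) (at 0)"
      using cont[of "axis i 1"] by (simp add: continuous_on_def)
    then have "\<forall>\<^sub>F s in at 0. dist (R s (axis i 1)) (R 0 (axis i 1)) < 1/8"
      by (rule tendstoD) simp
    then show "\<forall>\<^sub>F s in at 0. dist (R s (axis i 1)) (axis i 1) < 1/8"
      using R0 by simp
  qed
  then obtain d where d: "d > 0" "\<And>s. s \<noteq> 0 \<Longrightarrow> dist s 0 < d \<Longrightarrow> \<forall>i. dist (R s (axis i 1)) (axis i 1) < 1/8"
    by (auto simp: eventually_at)
  have "\<forall>s\<in>{0..d/2}. \<forall>x. norm (R s x - x) \<le> norm x / 2"
  proof (intro ballI allI)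
    fix s x assume s: "s \<in> {0..d/2}"
    show "norm (R s x - x) \<le> norm x / 2"
    proof (cases "s = 0")
      case True then show ?thesis using R0 by simp
    next
      case False
      then have "\<forall>i. dist (R s (axis i 1)) (axis i 1) < 1/8" using d s by auto
      then have b: "\<And>i. norm ((\<lambda>x. R s x - x) (axis i 1)) \<le> 1/8"
        by (simp add: dist_norm less_imp_le)
      have l: "linear (\<lambda>x. R s x - x)" using lin[of s] by (intro linear_compose_sub linear_ident) auto
      have "norm ((\<lambda>x. R s x - x) x) \<le> 4 * (1/8) * norm x" by (rule lin_bound_basis[OF l b])
      then show ?thesis by simp
    qed
  qed
  then show ?thesis using d by (intro exI[of _ "d/2"]) auto
qed

lemma group_deriv:
  fixes R :: "real \<Rightarrow> real^4 \<Rightarrow> real^4"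
  assumes lin: "\<And>\<theta>. linear (R \<theta>)" and grp: "\<And>a b. R (a+b) = R a \<circ> R b" and R0: "R 0 = id"
   and cont: "\<And>x. continuous_on UNIV (\<lambda>\<theta>. R \<theta> x)"
  shows "\<exists>A. linear A \<and> (\<forall>x \<theta>. ((\<lambda>s. R s x) has_vector_derivative R \<theta> (A x)) (at \<theta>))"
proof -
  obtain h where h: "h > 0" "\<And>s x. s\<in>{0..h} \<Longrightarrow> norm (R s x - x) \<le> norm x / 2"
    using small_time[OF lin R0 cont] by blast
  have intg: "\<And>a b y. (\<lambda>s. R s y) integrable_on {a..b}"
    using cont by (intro integrable_continuous_real) (auto intro: continuous_on_subset)
  define N where "N y = integral {0..h} (\<lambda>s. R s y)" for y
  have linN: "linear N"
  proof
    fix x y show "N (x + y) = N x + N y"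
      unfolding N_def using lin by (simp add: linear_add integral_add intg)
  next
    fix c x show "N (c *\<^sub>R x) = c *\<^sub>R N x"
      unfolding N_def using lin by (simp add: linear_scale integral_mult)
  qed
  have injN: "inj N"
  proof (rule linear_inj_iff_eq_0[OF linN, THEN iffD2], intro allI impI)
    fix y assume "N y = 0"
    have "((\<lambda>s. R s y - y) has_integral (N y - h *\<^sub>R y)) (cbox 0 h)"
      unfolding N_def using h(1) intg
      using has_integral_const_real[of y 0 h]
      by (auto intro!: has_integral_diff integrable_integral)
    from has_integral_bound[OF _ this, of "norm y / 2"] h
    have "norm (N y - h *\<^sub>R y) \<le> norm y / 2 * h" by auto
    then have "h * norm y \<le> norm y / 2 * h" using \<open>N y = 0\<close> h(1) by simp
    then show "y = 0" using h(1) by (simp add: mult.commute)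
  qed
  obtain g where g: "linear g" "N \<circ> g = id"
    using linear_surjective_right_inverse[OF linN linear_injective_imp_surjective[OF linN injN]] by auto
  define A where "A x = R h (g x) - g x" for x
  have linA: "linear A" unfolding A_def using g(1) lin
    using linear_compose_sub[OF linear_compose[OF g(1) lin[of h]] g(1)] by (simp add: o_def)
  have "((\<lambda>s. R s x) has_vector_derivative R \<theta> (A x)) (at \<theta>)" for x \<theta>
  proof -
    define y where "y = g x"
    have xy: "x = N y" using g(2) unfolding y_def by (metis comp_apply id_apply)
    define G where "G c = integral {\<theta>-1..c} (\<lambda>s. R s y)" for c
    have Gd: "(G has_vector_derivative R c y) (at c)" if "c > \<theta> - 1" for c
    proof -
      have d: "(G has_vector_derivative R c y) (at c within {\<theta>-1..c+1})"
        unfolding G_def using that cont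
        by (intro integral_has_vector_derivative) (auto intro: continuous_on_subset)
      have i: "at c within {\<theta>-1..c+1} = at c" using that by (intro at_within_interior) simp
      show ?thesis using d unfolding i .
    qed
    have eq: "R k x = G (k + h) - G k" if "k \<in> ball \<theta> 1" for k
    proof -
      have "R k x = integral {0..h} (R k \<circ> (\<lambda>s. R s y))"
        unfolding xy N_def using lin[of k]
        by (simp add: integral_linear intg linear_conv_bounded_linear)
      also have "\<dots> = integral {0..h} ((\<lambda>s. R s y) \<circ> (+) k)"
        by (rule arg_cong[where f="integral _"]) (auto simp: grp)
      also have "\<dots> = integral {k..k+h} (\<lambda>s. R s y)"
        by (simp add: integral_shift_Icc_real add.commute)
      also have "\<dots> = G (k+h) - G k"
      proof -
        have "k \<in> {\<theta>-1<..<\<theta>+1}" using that by (auto simp: dist_real_def)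
        then have "integral {\<theta>-1..k} (\<lambda>s. R s y) + integral {k..k+h} (\<lambda>s. R s y) = integral {\<theta>-1..k+h} (\<lambda>s. R s y)"
          using h(1) by (intro Henstock_Kurzweil_Integration.integral_combine intg) auto
        then show ?thesis by (simp add: G_def algebra_simps)
      qed
      finally show ?thesis .
    qed
    have sh: "((\<lambda>k. k + h) has_vector_derivative 1) (at \<theta>)"
      using has_vector_derivative_add[OF has_vector_derivative_id has_vector_derivative_const[of h]] by simp
    have d1: "((\<lambda>k. G (k + h)) has_vector_derivative R (\<theta>+h) y) (at \<theta>)"
      using vector_diff_chain_at[OF sh, of G "R (\<theta>+h) y"] Gd[of "\<theta>+h"] h(1)
      by (simp add: o_def)
    have "((\<lambda>k. G (k + h) - G k) has_vector_derivative R (\<theta>+h) y - R \<theta> y) (at \<theta>)"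
      by (intro has_vector_derivative_diff d1 Gd) auto
    then have "((\<lambda>k. R k x) has_vector_derivative R (\<theta>+h) y - R \<theta> y) (at \<theta>)"
      by (rule has_vector_derivative_transform_within_open[of _ _ _ "ball \<theta> 1"]) (auto simp: eq)
    moreover have "R (\<theta>+h) y - R \<theta> y = R \<theta> (A x)"
      unfolding A_def y_def using grp[of \<theta> h] lin[of \<theta>] by (simp add: linear_diff)
    ultimately show ?thesis by simp
  qed
  then show ?thesis using linA by blast
qed



lemma mink_sym: "mink x y = mink y x" by (simp add: mink_def algebra_simps)
lemma mink_add_left: "mink (x + y) z = mink x z + mink y z" by (simp add: mink_def algebra_simps)
lemma mink_add_right: "mink z (x + y) = mink z x + mink z y" by (simp add: mink_def algebra_simps)
lemma mink_diff_left: "mink (x - y) z = mink x z - mink y z" by (simp add: mink_def algebra_simps)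
lemma mink_diff_right: "mink z (x - y) = mink z x - mink z y" by (simp add: mink_def algebra_simps)
lemma mink_scale_left: "mink (c *\<^sub>R x) z = c * mink x z" by (simp add: mink_def algebra_simps)
lemma mink_scale_right: "mink z (c *\<^sub>R x) = c * mink z x" by (simp add: mink_def algebra_simps)
lemma mink_zero_left[simp]: "mink 0 z = 0" by (simp add: mink_def)
lemma mink_zero_right[simp]: "mink z 0 = 0" by (simp add: mink_def)
lemmas mink_simps = mink_add_left mink_add_right mink_diff_left mink_diff_right mink_scale_left mink_scale_right

lemma linear_mink: "linear (\<lambda>y. mink x y)"
  by (rule linearI) (simp_all add: mink_simps)

lemma four0: "(4::4) = 0" by simp

lemma vec4_eq_0: "(y::real^4) = 0 \<longleftrightarrow> y$0 = 0 \<and> y$1 = 0 \<and> y$2 = 0 \<and> y$3 = 0"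
proof -
  have "(y = 0) \<longleftrightarrow> (\<forall>i::4. y$i = 0)" by (simp add: vec_eq_iff)
  also have "\<dots> \<longleftrightarrow> y$1 = 0 \<and> y$2 = 0 \<and> y$3 = 0 \<and> y$4 = 0" by (simp add: forall_4)
  finally show ?thesis by (simp add: four0 conj_commute conj_left_commute)
qed

lemma real_spacelike:
  fixes a b1 b2 b3 c0 c1 c2 c3 :: real
  assumes tl: "b1^2 + b2^2 + b3^2 < a^2"
    and orth: "a * c0 = b1*c1 + b2*c2 + b3*c3"
    and nz: "c0 \<noteq> 0 \<or> c1 \<noteq> 0 \<or> c2 \<noteq> 0 \<or> c3 \<noteq> 0"
  shows "c0^2 < c1^2 + c2^2 + c3^2"
proof (rule ccontr)
  assume ng: "\<not> c0^2 < c1^2 + c2^2 + c3^2"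
  define S where "S = c1^2 + c2^2 + c3^2"
  define B where "B = b1^2 + b2^2 + b3^2"
  have lag: "(b1*c1 + b2*c2 + b3*c3)^2 \<le> B * S"
  proof -
    have "B * S - (b1*c1 + b2*c2 + b3*c3)^2 = (b1*c2-b2*c1)^2 + (b1*c3-b3*c1)^2 + (b2*c3-b3*c2)^2"
      unfolding B_def S_def by (simp add: power2_eq_square algebra_simps)
    moreover have "0 \<le> (b1*c2-b2*c1)^2 + (b1*c3-b3*c1)^2 + (b2*c3-b3*c2)^2" by simp
    ultimately show ?thesis by linarith
  qed
  have B0: "0 \<le> B" unfolding B_def by simp
  have a2: "0 < a^2" using tl B0 unfolding B_def by linarith
  show False
  proof (cases "S = 0")
    case True
    then have "c1 = 0" "c2 = 0" "c3 = 0" unfolding S_def by (simp_all add: sum_power2_eq_zero_iff add_nonneg_eq_0_iff)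
    then have "a * c0 = 0" using orth by simp
    then have "c0 = 0" using a2 by auto
    then show False using nz \<open>c1 = 0\<close> \<open>c2 = 0\<close> \<open>c3 = 0\<close> by simp
  next
    case False
    then have S0: "0 < S" unfolding S_def by (metis add_nonneg_nonneg le_less zero_le_power2)
    have "a^2 * c0^2 = (b1*c1 + b2*c2 + b3*c3)^2" using orth by (metis power_mult_distrib)
    also have "\<dots> \<le> B * S" by (rule lag)
    also have "\<dots> < a^2 * S" using tl S0 unfolding B_def by (simp add: mult_strict_right_mono)
    also have "\<dots> \<le> a^2 * c0^2" using ng a2 unfolding S_def by (simp add: mult_left_mono)
    finally show False by simp
  qed
qed

lemma spacelike_orth:
  fixes x y :: "real^4"
  assumes "mink x x < 0" "mink x y = 0" "y \<noteq> 0"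
  shows "mink y y > 0"
proof -
  have "(y$0)^2 < (y$1)^2 + (y$2)^2 + (y$3)^2"
    using assms vec4_eq_0[of y]
    by (intro real_spacelike[of "x$1" "x$2" "x$3" "x$0"]) (auto simp: mink_def power2_eq_square algebra_simps)
  then show ?thesis by (simp add: mink_def power2_eq_square)
qed

lemma H3_neg: "x \<in> H3 \<Longrightarrow> mink x x < 0" by (simp add: H3_def)
lemma H3_nz: "x \<in> H3 \<Longrightarrow> x \<noteq> 0" by (auto simp: H3_def)

definition J :: "real^4 \<Rightarrow> real^4" where "J v = (\<chi> i. if i = 0 then - (v$i) else v$i)"
lemma mink_J: "mink (J u) w = inner u w"
  by (simp add: J_def mink_def inner_vec_def sum_4 four0)
lemma J_nz: "J u = 0 \<Longrightarrow> u = 0"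
  by (simp add: J_def vec_eq_iff) (metis neg_equal_0_iff_equal)
lemma mink_self_J: "mink w (J w) = inner w w"
  by (simp add: J_def mink_def inner_vec_def sum_4 four0)

lemma linear_mink_left: "linear (\<lambda>x. mink x y)"
  by (rule linearI) (simp_all add: mink_simps)

lemma bb_mink: "bounded_bilinear mink"
  by (simp add: bilinear_conv_bounded_bilinear[symmetric] bilinear_def linear_mink linear_mink_left)

lemma mink_has_vd:
  assumes "(f has_vector_derivative f') (at x within s)" "(g has_vector_derivative g') (at x within s)"
  shows "((\<lambda>x. mink (f x) (g x)) has_vector_derivative (mink (f x) g' + mink f' (g x))) (at x within s)"
  by (rule bounded_bilinear.has_vector_derivative[OF bb_mink assms])

lemma geod_two_points:
  assumes "hgeodesic \<sigma>"
  obtains V x z where "subspace V" "\<sigma> = H3 \<inter> V" "x \<in> \<sigma>" "z \<in> \<sigma>" "z \<notin> span {x}"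
proof -
  obtain V where V: "subspace V" "dim V = 2" "\<sigma> = H3 \<inter> V" and ne: "\<sigma> \<noteq> {}"
    using assms unfolding hgeodesic_def by blast
  obtain x where x: "x \<in> \<sigma>" using ne by blast
  have xH: "x \<in> H3" "x \<in> V" using x V by auto
  have mxx: "mink x x = -1" using xH by (simp add: H3_def)
  obtain y where y: "y \<in> V" "y \<notin> span {x}"
  proof (rule ccontr)
    assume "\<not> thesis"
    then have "V \<subseteq> span {x}" using that by blast
    then have "dim V \<le> dim (span {x})" by (rule dim_subset)
    also have "\<dots> \<le> 1" by (simp add: dim_insert)
    finally show False using V by simp
  qed
  define y' where "y' = y + mink y x *\<^sub>R x"
  have y'V: "y' \<in> V" unfolding y'_def using V(1) y(1) xH(2) by (simp add: subspace_add subspace_scale)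
  have my'x: "mink x y' = 0" unfolding y'_def using mxx by (simp add: mink_simps mink_sym)
  have y'ns: "y' \<notin> span {x}"
  proof
    assume "y' \<in> span {x}"
    then have "y' - mink y x *\<^sub>R x \<in> span {x}" by (simp add: span_diff span_scale span_base)
    then show False using y(2) unfolding y'_def by simp
  qed
  then have "y' \<noteq> 0" using span_zero by auto
  then have py: "mink y' y' > 0" using spacelike_orth[OF H3_neg[OF xH(1)] my'x] by simp
  define e where "e = (1 / sqrt (mink y' y')) *\<^sub>R y'"
  have mee: "mink e e = 1" unfolding e_def using py by (simp add: mink_simps power2_eq_square[symmetric])
  have mxe: "mink x e = 0" "mink e x = 0" unfolding e_def using my'x by (simp_all add: mink_simps mink_sym)
  have eV: "e \<in> V" unfolding e_def using V(1) y'V by (simp add: subspace_scale)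
  have ens: "e \<notin> span {x}"
  proof
    assume "e \<in> span {x}"
    then have "sqrt (mink y' y') *\<^sub>R e \<in> span {x}" by (simp add: span_scale)
    then show False using y'ns py unfolding e_def by simp
  qed
  define z1 where "z1 = 2 *\<^sub>R x + sqrt 3 *\<^sub>R e"
  define z2 where "z2 = 2 *\<^sub>R x - sqrt 3 *\<^sub>R e"
  have mz: "mink z1 z1 = -1" "mink z2 z2 = -1"
    unfolding z1_def z2_def using mxx mee mxe by (simp_all add: mink_simps)
  have zV: "z1 \<in> V" "z2 \<in> V" unfolding z1_def z2_def using V(1) xH(2) eV
    by (simp_all add: subspace_add subspace_diff subspace_scale)
  have "z1$0 + z2$0 = 4 * x$0" unfolding z1_def z2_def by simp
  moreover have "x$0 > 0" using xH(1) by (simp add: H3_def)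
  ultimately obtain z s where z: "z$0 > 0" "mink z z = -1" "z \<in> V" "z = 2 *\<^sub>R x + s *\<^sub>R e" "s \<noteq> 0"
    using mz zV unfolding z1_def z2_def
    by (smt (verit, best) real_sqrt_eq_zero_cancel_iff scaleR_minus_left diff_conv_add_uminus)
  have zs: "z \<in> \<sigma>" using z V(3) by (simp add: H3_def)
  have "z \<notin> span {x}"
  proof
    assume "z \<in> span {x}"
    then have "(1/s) *\<^sub>R (z - 2 *\<^sub>R x) \<in> span {x}" by (simp add: span_diff span_scale span_base)
    then show False using ens z(4,5) by simp
  qed
  then show ?thesis using that V(1,3) x zs by blast
qed

lemma rot_basic:
  assumes rot: "angle_param \<sigma> R"
  shows "R 0 = id" "\<And>\<theta>. linear (R \<theta>)" "\<And>\<theta> x y. mink (R \<theta> x) (R \<theta> y) = mink x y"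
    "\<And>\<theta> x. x \<in> \<sigma> \<Longrightarrow> R \<theta> x = x" "\<And>a b. R (a + b) = R a \<circ> R b"
    "\<And>x. continuous_on UNIV (\<lambda>\<theta>. R \<theta> x)" "R pi \<noteq> id"
proof -
  show "R 0 = id" using rot unfolding angle_param_def by (metis mult_zero_right of_int_0)
  show "\<And>\<theta>. linear (R \<theta>)" "\<And>\<theta> x y. mink (R \<theta> x) (R \<theta> y) = mink x y"
    "\<And>\<theta> x. x \<in> \<sigma> \<Longrightarrow> R \<theta> x = x" "\<And>a b. R (a + b) = R a \<circ> R b"
    "\<And>x. continuous_on UNIV (\<lambda>\<theta>. R \<theta> x)"
    using rot unfolding angle_param_def hrotation_about_def hisometry_def by auto
  show "R pi \<noteq> id"
  proof
    assume "R pi = id"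
    then obtain k :: int where "pi = 2 * pi * of_int k" using rot unfolding angle_param_def by blast
    then have "1 = 2 * (of_int k :: real)" by (metis mult.commute mult_cancel_left1 pi_neq_zero mult.assoc)
    then have "(1::int) = 2 * k" by (metis of_int_1 of_int_eq_iff of_int_mult of_int_numeral)
    then show False by presburger
  qed
qed

lemma vd_const_unique:
  assumes "((\<lambda>s. c) has_vector_derivative v) (at t)"
  shows "v = (0::'a::real_normed_vector)"
  using vector_derivative_unique_at[OF assms has_vector_derivative_const] .

lemma geometry:
  assumes geod: "hgeodesic \<sigma>" and plane: "hplane P" and sub: "\<sigma> \<subseteq> P"
    and rot: "angle_param \<sigma> R"
    and linA: "linear A" and dA: "\<And>x \<theta>. ((\<lambda>s. R s x) has_vector_derivative R \<theta> (A x)) (at \<theta>)"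
  shows "\<exists>W. subspace W \<and> P = H3 \<inter> W \<and> (\<forall>p\<in>P - \<sigma>. A p \<noteq> 0 \<and> (\<forall>w\<in>W. mink (A p) w = 0))"
    and "\<And>u v. mink (A u) v = - mink u (A v)"
proof -
  note rb = rot_basic[OF rot]
  have R0x: "R 0 x = x" for x using rb(1) by simp
  show skew: "mink (A u) v = - mink u (A v)" for u v
  proof -
    have "((\<lambda>s. mink (R s u) (R s v)) has_vector_derivative (mink (R 0 u) (R 0 (A v)) + mink (R 0 (A u)) (R 0 v))) (at 0)"
      by (intro mink_has_vd dA)
    moreover have "(\<lambda>s. mink (R s u) (R s v)) = (\<lambda>s. mink u v)" using rb(3) by simp
    ultimately have "mink (R 0 u) (R 0 (A v)) + mink (R 0 (A u)) (R 0 v) = 0"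
      by (metis vd_const_unique)
    then show ?thesis using R0x by simp
  qed
  have Afix: "A x = 0" if "x \<in> \<sigma>" for x
  proof -
    have "((\<lambda>s. R s x) has_vector_derivative R 0 (A x)) (at 0)" by (rule dA)
    moreover have "(\<lambda>s. R s x) = (\<lambda>s. x)" using rb(4) that by simp
    ultimately show ?thesis using R0x by (metis vd_const_unique)
  qed
  have orbit_const: "R \<theta> p = p" if "A p = 0" for p \<theta>
  proof -
    have "\<exists>c. \<forall>s\<in>UNIV. R s p = c"
    proof (rule has_derivative_zero_constant)
      fix s :: real
      have "((\<lambda>s. R s p) has_vector_derivative 0) (at s)"
        using dA[of p s] that linear_0[OF rb(2)] by simp
      then show "((\<lambda>s. R s p) has_derivative (\<lambda>h. 0)) (at s within UNIV)"
        by (simp add: has_vector_derivative_def)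
    qed simp
    then show ?thesis using R0x[of p] by (metis UNIV_I)
  qed
  obtain V x z where V: "subspace V" "\<sigma> = H3 \<inter> V" and xz: "x \<in> \<sigma>" "z \<in> \<sigma>" "z \<notin> span {x}"
    using geod_two_points[OF geod] by metis
  obtain W where W: "subspace W" "dim W = 3" "P = H3 \<inter> W"
    using plane unfolding hplane_def by blast
  have xzW: "x \<in> W" "z \<in> W" using xz sub W by auto
  have xH: "x \<in> H3" using xz V by auto
  have "\<forall>p\<in>P - \<sigma>. A p \<noteq> 0 \<and> (\<forall>w\<in>W. mink (A p) w = 0)"
  proof
    fix p assume p: "p \<in> P - \<sigma>"
    have pH: "p \<in> H3" "p \<in> W" using p W by auto
    have pV: "p \<notin> V" using p pH V by auto
    have "span {z, x} \<subseteq> V" using V xz by (intro span_minimal) auto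
    then have pns: "p \<notin> span {z, x}" using pV by auto
    have x0: "x \<noteq> 0" using H3_nz[OF xH] .
    have dim3: "dim {p, z, x} = 3"
      using pns xz(3) x0 by (simp add: dim_insert)
    have Weq: "W = span {p, z, x}"
    proof (rule subspace_dim_equal[symmetric])
      show "subspace (span {p, z, x})" by (rule subspace_span)
      show "subspace W" by (rule W(1))
      show "span {p, z, x} \<subseteq> W" using W(1) pH xzW by (intro span_minimal) auto
      show "dim W \<le> dim (span {p, z, x})" using W(2) dim3 by simp
    qed
    have Axz: "A x = 0" "A z = 0" using Afix xz by auto
    have orth: "\<forall>w\<in>W. mink (A p) w = 0"
    proof
      fix w assume "w \<in> W"
      then have "w \<in> span {p, z, x}" using Weq by simp
      then show "mink (A p) w = 0"
      proof (induct rule: span_induct)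
        case base
        show ?case unfolding subspace_def by (simp add: mink_simps)
      next
        case (step y)
        then show ?case using skew[of p p] skew[of p z] skew[of p x] Axz mink_sym[of "A p" p]
          by (auto simp: linear_0[OF linA])
      qed
    qed
    have "A p \<noteq> 0"
    proof
      assume Ap: "A p = 0"
      have fixW: "R \<theta> w = w" if "w \<in> W" for w \<theta>
      proof -
        have ws: "w \<in> span {p, z, x}" using that Weq by simp
        have e: "\<And>y. y \<in> {p, z, x} \<Longrightarrow> R \<theta> y = id y"
          using orbit_const[OF Ap] rb(4) xz by auto
        have "R \<theta> w = id w" by (rule linear_eq_on_span[OF rb(2) linear_id e ws])
        then show ?thesis by simp
      qed
      have "dim W < DIM(real^4)" using W(2) by simp
      then obtain m :: "real^4" where m: "m \<noteq> 0" "\<And>y. y \<in> span W \<Longrightarrow> orthogonal m y"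
        by (rule orthogonal_to_subspace_exists) blast
      define n where "n = J m"
      have nW: "mink n w = 0" if "w \<in> W" for w
        using m(2)[of w] that span_superset[of W] unfolding n_def orthogonal_def mink_J by auto
      have n0: "n \<noteq> 0" using m(1) J_nz unfolding n_def by blast
      have nn: "mink n n > 0"
        using spacelike_orth[OF H3_neg[OF xH], of n] nW[OF xzW(1)] n0 by (simp add: mink_sym)
      have nnotW: "n \<notin> W" using nW nn by force
      have "dim (insert n W) = 4" using nnotW W by (simp add: dim_insert span_eq_iff[THEN iffD2])
      then have full: "span (insert n W) = UNIV" using dim_eq_full[of "insert n W"] by simp
      have Rn: "\<exists>c. R \<theta> n = c *\<^sub>R n \<and> c^2 = 1" for \<theta>
      proof -
        obtain c where w0: "R \<theta> n - c *\<^sub>R n \<in> W"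
          using full span_insert[of n W] W(1) by (auto simp: span_eq_iff[THEN iffD2])
        define w0 where "w0 = R \<theta> n - c *\<^sub>R n"
        have "mink w0 y = 0" if "y \<in> span (insert n W)" for y
          using that
        proof (induct rule: span_induct)
          case base
          show ?case unfolding subspace_def by (simp add: mink_simps)
        next
          case (step y)
          then show ?case
          proof
            assume "y = n"
            then show ?thesis using nW[OF w0] unfolding w0_def by (simp add: mink_sym)
          next
            assume yW: "y \<in> W"
            have "mink (R \<theta> n) y = mink (R \<theta> n) (R \<theta> y)" using fixW[OF yW] by simp
            also have "\<dots> = mink n y" by (rule rb(3))
            finally show ?thesis unfolding w0_def using nW[OF yW] by (simp add: mink_simps)
          qed
        qed
        then have "mink w0 (J w0) = 0" using full by simp
        then have "w0 = 0" by (simp add: mink_self_J)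
        then have Rc: "R \<theta> n = c *\<^sub>R n" unfolding w0_def by simp
        have "mink n n = mink (R \<theta> n) (R \<theta> n)" by (simp add: rb(3))
        also have "\<dots> = c^2 * mink n n" using Rc by (simp add: mink_simps power2_eq_square)
        finally have "c^2 = 1" using nn by simp
        then show ?thesis using Rc by blast
      qed
      obtain c where c: "R (pi/2) n = c *\<^sub>R n" "c^2 = 1" using Rn[of "pi/2"] by blast
      have "R pi n = R (pi/2) (R (pi/2) n)" using rb(5)[of "pi/2" "pi/2"] by simp
      also have "\<dots> = c^2 *\<^sub>R n" using c(1) linear_scale[OF rb(2)] by (simp add: power2_eq_square)
      finally have "R pi n = n" using c(2) by simp
      then have e2: "R pi y = id y" if "y \<in> insert n W" for y using that fixW by auto
      have "R pi y = id y" for y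
      proof -
        have ys: "y \<in> span (insert n W)" using full by simp
        show ?thesis by (rule linear_eq_on_span[OF rb(2)[of pi] linear_id e2 ys])
      qed
      then show False using rb(7) by auto
    qed
    then show "A p \<noteq> 0 \<and> (\<forall>w\<in>W. mink (A p) w = 0)" using orth by blast
  qed
  then show "\<exists>W. subspace W \<and> P = H3 \<inter> W \<and> (\<forall>p\<in>P - \<sigma>. A p \<noteq> 0 \<and> (\<forall>w\<in>W. mink (A p) w = 0))"
    using W by blast
qed



lemma length_unbounded:
  fixes f :: "real \<Rightarrow> real"
  assumes cont: "continuous_on {0..} f" and nn: "\<And>x. x \<ge> 0 \<Longrightarrow> 0 \<le> f x"
    and inf: "set_nn_integral lborel {0..} (\<lambda>t. ennreal (f t)) = \<infinity>"
  shows "\<exists>T\<ge>0. integral {0..T} f > M"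
proof (rule ccontr)
  assume "\<not> (\<exists>T\<ge>0. integral {0..T} f > M)"
  then have bd: "\<And>T. T \<ge> 0 \<Longrightarrow> integral {0..T} f \<le> M" by (simp add: not_less)
  define F where "F n x = ennreal (f x) * indicator {0..real n} x" for n :: nat and x :: real
  have inc: "incseq F"
    unfolding F_def by (intro incseq_SucI le_funI) (auto simp: indicator_def)
  have meas: "F n \<in> borel_measurable lborel" for n
  proof -
    have "(\<lambda>x. indicator {0..real n} x *\<^sub>R f x) \<in> borel_measurable borel"
      using cont by (intro borel_measurable_continuous_on_indicator) (auto intro: continuous_on_subset)
    then have "(\<lambda>x. ennreal (indicator {0..real n} x *\<^sub>R f x)) \<in> borel_measurable borel" by measurable
    moreover have "(\<lambda>x. ennreal (indicator {0..real n} x *\<^sub>R f x)) = F n"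
      unfolding F_def by (auto simp: indicator_def)
    ultimately show ?thesis by simp
  qed
  have sup: "(SUP n. F n x) = ennreal (f x) * indicator {0..} x" for x
  proof (cases "x \<ge> 0")
    case True
    have "(SUP n. F n x) = ennreal (f x)"
    proof (rule antisym)
      show "(SUP n. F n x) \<le> ennreal (f x)" unfolding F_def by (intro SUP_least) (auto simp: indicator_def)
      have "F (nat \<lceil>x\<rceil>) x = ennreal (f x)" unfolding F_def using True
        by (auto simp: indicator_def)
      then show "ennreal (f x) \<le> (SUP n. F n x)" by (metis SUP_upper UNIV_I)
    qed
    then show ?thesis using True by simp
  next
    case False
    then show ?thesis unfolding F_def by (simp add: indicator_def)
  qed
  have int: "integral\<^sup>N lborel (F n) = ennreal (integral {0..real n} f)" for n
  proof -
    have "(f has_integral integral {0..real n} f) {0..real n}"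
      using cont by (intro integrable_integral integrable_continuous_real) (auto intro: continuous_on_subset)
    then show ?thesis unfolding F_def using nn by (intro nn_integral_has_integral_lebesgue') auto
  qed
  have "set_nn_integral lborel {0..} (\<lambda>t. ennreal (f t)) = (\<integral>\<^sup>+ x. (SUP n. F n x) \<partial>lborel)"
    by (simp add: sup)
  also have "\<dots> = (SUP n. integral\<^sup>N lborel (F n))"
    by (rule nn_integral_monotone_convergence_SUP[OF inc meas])
  also have "\<dots> \<le> ennreal M"
    by (intro SUP_least) (auto simp: int bd intro: ennreal_leI)
  finally show False using inf by (simp add: top_unique)
qed



lemma second_deriv_max:
  fixes f f' :: "real \<Rightarrow> real"
  assumes d: "d > 0"
    and d1: "\<And>s. s \<in> {t-d<..<t+d} \<Longrightarrow> (f has_real_derivative f' s) (at s)"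
    and d2: "(f' has_real_derivative f2) (at t)"
    and mx: "\<And>s. s \<in> {t-d<..<t+d} \<Longrightarrow> f s \<le> f t"
  shows "f' t = 0" "f2 \<le> 0"
proof -
  show ft: "f' t = 0"
    by (rule DERIV_local_max[OF d1[of t] d]) (use d mx in \<open>auto simp: abs_less_iff\<close>)
  show "f2 \<le> 0"
  proof (rule ccontr)
    assume "\<not> f2 \<le> 0"
    then obtain e where e: "e > 0" "\<And>h. h > 0 \<Longrightarrow> h < e \<Longrightarrow> f' t < f' (t + h)"
      using DERIV_pos_inc_right[OF d2] by force
    define h where "h = min e d / 2"
    have h: "h > 0" "h < e" "h < d" unfolding h_def using e d by auto
    obtain \<xi> where \<xi>: "t < \<xi>" "\<xi> < t + h" "f (t + h) - f t = (t + h - t) * f' \<xi>"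
      using MVT2[of t "t+h" f f'] h d1 by force
    have "f' \<xi> > 0" using e(2)[of "\<xi> - t"] \<xi> h ft by auto
    then have "f (t + h) > f t" using \<xi>(3) h by (simp add: algebra_simps)
    moreover have "f (t + h) \<le> f t" using mx[of "t+h"] h by auto
    ultimately show False by simp
  qed
qed

lemma periodic_reduce:
  fixes f :: "real \<Rightarrow> 'a"
  assumes per: "\<And>\<theta>. f (\<theta> + 2 * pi) = f \<theta>"
  shows "\<exists>\<theta>'\<in>{0..2*pi}. f \<theta>' = f \<theta>"
proof -
  have pn: "f (x + 2 * pi * real n) = f x" for x n
    by (induct n) (auto simp: algebra_simps per[of "x + 2 * pi * real _", simplified algebra_simps])
  define k where "k = \<lfloor>\<theta> / (2*pi)\<rfloor>"
  define \<theta>' where "\<theta>' = \<theta> - 2 * pi * of_int k"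
  have "of_int k \<le> \<theta> / (2*pi)" "\<theta> / (2*pi) < of_int k + 1" unfolding k_def by linarith+
  then have r: "0 \<le> \<theta>'" "\<theta>' \<le> 2 * pi" unfolding \<theta>'_def using pi_gt_zero
    by (auto simp: field_simps)
  have "f \<theta>' = f \<theta>"
  proof (cases "k \<ge> 0")
    case True
    then have "\<theta> = \<theta>' + 2 * pi * real (nat k)" unfolding \<theta>'_def by simp
    then show ?thesis using pn by metis
  next
    case False
    then have "\<theta>' = \<theta> + 2 * pi * real (nat (-k))" unfolding \<theta>'_def by simp
    then show ?thesis using pn by metis
  qed
  then show ?thesis using r by auto
qed

lemma max_principle:
  fixes a b da db :: "real \<Rightarrow> real" and u v ut vt utt vtt uh vh uhh vhh :: "real \<times> real \<Rightarrow> real"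
  assumes bpos: "\<And>t. t \<ge> 0 \<Longrightarrow> b t > 0" and apos: "\<And>t. t > 0 \<Longrightarrow> a t > 0"
   and ab: "\<And>t. t > 0 \<Longrightarrow> a t * b t = 1"
   and bcont: "continuous_on {0..} b"
   and da: "\<And>t. t > 0 \<Longrightarrow> (a has_real_derivative da t) (at t)"
   and db: "\<And>t. t > 0 \<Longrightarrow> (b has_real_derivative db t) (at t)"
   and unb: "\<And>M. \<exists>T\<ge>0. integral {0..T} b > M"
   and Hu: "\<And>t \<theta>. t > 0 \<Longrightarrow> ((\<lambda>s. u (s,\<theta>)) has_real_derivative ut (t,\<theta>)) (at t) \<and>
        ((\<lambda>s. ut (s,\<theta>)) has_real_derivative utt (t,\<theta>)) (at t) \<and>
        ((\<lambda>s. u (t,s)) has_real_derivative uh (t,\<theta>)) (at \<theta>) \<and>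
        ((\<lambda>s. uh (t,s)) has_real_derivative uhh (t,\<theta>)) (at \<theta>) \<and>
        da t * ut (t,\<theta>) + a t * utt (t,\<theta>) + b t * uhh (t,\<theta>) = 0"
   and Hv: "\<And>t \<theta>. t > 0 \<Longrightarrow> ((\<lambda>s. v (s,\<theta>)) has_real_derivative vt (t,\<theta>)) (at t) \<and>
        ((\<lambda>s. vt (s,\<theta>)) has_real_derivative vtt (t,\<theta>)) (at t) \<and>
        ((\<lambda>s. v (t,s)) has_real_derivative vh (t,\<theta>)) (at \<theta>) \<and>
        ((\<lambda>s. vh (t,s)) has_real_derivative vhh (t,\<theta>)) (at \<theta>) \<and>
        da t * vt (t,\<theta>) + a t * vtt (t,\<theta>) + b t * vhh (t,\<theta>) = 0"
   and peru: "\<And>t \<theta>. u (t, \<theta> + 2*pi) = u (t,\<theta>)" and perv: "\<And>t \<theta>. v (t, \<theta> + 2*pi) = v (t,\<theta>)"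
   and contu: "continuous_on {x. fst x \<ge> 0} u" and contv: "continuous_on {x. fst x \<ge> 0} v"
   and bddu: "\<exists>B. \<forall>x. fst x \<ge> 0 \<longrightarrow> \<bar>u x\<bar> \<le> B" and bddv: "\<exists>B. \<forall>x. fst x \<ge> 0 \<longrightarrow> \<bar>v x\<bar> \<le> B"
   and bd0: "\<And>\<theta>. u (0,\<theta>) = v (0,\<theta>)"
   and x: "fst x \<ge> 0"
  shows "u x \<le> v x"
proof (rule ccontr)
  assume "\<not> u x \<le> v x"
  obtain t0 \<theta>0 where x0: "x = (t0, \<theta>0)" by (cases x)
  define w where "w y = u y - v y" for y
  define \<eta> where "\<eta> = w (t0,\<theta>0)"
  have \<eta>: "\<eta> > 0" using \<open>\<not> u x \<le> v x\<close> x0 unfolding \<eta>_def w_def by simp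
  have t0: "t0 \<ge> 0" using x x0 by simp
  obtain Bu Bv where Bu: "\<And>y. fst y \<ge> 0 \<Longrightarrow> \<bar>u y\<bar> \<le> Bu" and Bv: "\<And>y. fst y \<ge> 0 \<Longrightarrow> \<bar>v y\<bar> \<le> Bv"
    using bddu bddv by blast
  define B where "B = Bu + Bv"
  have wB: "w y \<le> B" if "fst y \<ge> 0" for y using Bu[OF that] Bv[OF that] unfolding w_def B_def by linarith
  define \<phi> where "\<phi> t = integral {0..t} b" for t
  have bint: "b integrable_on {s..t}" if "0 \<le> s" for s t
    using bcont that by (intro integrable_continuous_real) (auto intro: continuous_on_subset)
  have \<phi>d: "(\<phi> has_real_derivative b t) (at t)" if "t > 0" for t
  proof -
    have "(\<phi> has_real_derivative b t) (at t within {0..t+1})"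
      unfolding \<phi>_def using bcont that by (intro integral_has_real_derivative) (auto intro: continuous_on_subset)
    moreover have "at t within {0..t+1} = at t" using that by (intro at_within_interior) simp
    ultimately show ?thesis by simp
  qed
  have \<phi>0: "\<phi> 0 = 0" unfolding \<phi>_def by simp
  have \<phi>mono: "\<phi> s \<le> \<phi> t" if "0 \<le> s" "s \<le> t" for s t
  proof -
    have "integral {0..s} b + integral {s..t} b = integral {0..t} b"
      using that bint[of 0 t] by (intro Henstock_Kurzweil_Integration.integral_combine) auto
    moreover have "0 \<le> integral {s..t} b" using that bpos bint[of s t] by (intro integral_nonneg) (auto intro: less_imp_le)
    ultimately show ?thesis unfolding \<phi>_def by linarith
  qed
  have \<phi>nn: "\<phi> t \<ge> 0" if "t \<ge> 0" for t
  proof -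
    have "\<phi> 0 \<le> \<phi> t" using \<phi>mono[of 0 t] that by blast
    then show ?thesis using \<phi>0 by simp
  qed
  have \<phi>cont: "continuous_on {0..T} \<phi>" for T
    unfolding \<phi>_def using bint[of 0 T, OF order_refl] by (rule indefinite_integral_continuous_1)
  define \<epsilon> where "\<epsilon> = \<eta> / (2 * (\<phi> t0 + 1))"
  have \<epsilon>: "\<epsilon> > 0" unfolding \<epsilon>_def using \<eta> \<phi>nn[OF t0] by simp
  have \<epsilon>t0: "\<epsilon> * \<phi> t0 < \<eta>" 
  proof -
    have "\<epsilon> * \<phi> t0 = \<eta> * (\<phi> t0 / (2 * (\<phi> t0 + 1)))" unfolding \<epsilon>_def by simp
    also have "\<dots> < \<eta> * 1" using \<eta> \<phi>nn[OF t0] by (intro mult_strict_left_mono) auto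
    finally show ?thesis by simp
  qed
  obtain T where T: "T \<ge> 0" "\<phi> T > max ((B + 1) / \<epsilon>) (\<phi> t0)" using unb[of "max ((B + 1) / \<epsilon>) (\<phi> t0)"]
    unfolding \<phi>_def by blast
  have Tt0: "t0 < T" using T \<phi>mono[of T t0] by force
  have \<epsilon>T: "\<epsilon> * \<phi> T > B + 1" using T(2) \<epsilon> by (simp add: field_simps)
  define \<delta> where "\<delta> = 1 / ((\<phi> T)^2 + 1)"
  have p1: "0 < (\<phi> T)^2 + 1" by (metis add_pos_nonneg zero_less_one zero_le_power2 add.commute)
  have \<delta>: "\<delta> > 0" "\<delta> * (\<phi> T)^2 < 1" unfolding \<delta>_def using p1 by (auto simp: field_simps)
  define z where "z y = w y - \<epsilon> * \<phi> (fst y) + \<delta> * (\<phi> (fst y))^2" for y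
  have zper: "z (t, \<theta> + 2*pi) = z (t, \<theta>)" for t \<theta> unfolding z_def w_def using peru perv by simp
  have z0: "z (0,\<theta>) = 0" for \<theta> unfolding z_def w_def using bd0 \<phi>0 by simp
  have zT: "z (T,\<theta>) < 0" for \<theta>
  proof -
    have "z (T,\<theta>) \<le> B - \<epsilon> * \<phi> T + \<delta> * (\<phi> T)^2" unfolding z_def using wB[of "(T,\<theta>)"] T(1) by simp
    then show ?thesis using \<epsilon>T \<delta> by linarith
  qed
  have zt0: "z (t0,\<theta>0) > 0"
  proof -
    have "0 \<le> \<delta> * (\<phi> t0)^2" using \<delta> by simp
    then show ?thesis unfolding z_def using \<epsilon>t0 \<eta>_def by simp
  qed
  define K where "K = {0..T} \<times> {0..2*pi}"
  have Kc: "compact K" unfolding K_def by (intro compact_Times) auto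
  have Kne: "K \<noteq> {}" unfolding K_def using T(1) by auto
  have zc: "continuous_on K z"
  proof -
    have KS: "K \<subseteq> {x. fst x \<ge> 0}" unfolding K_def by auto
    have "continuous_on K w" unfolding w_def using contu contv KS
      by (intro continuous_on_diff) (auto intro: continuous_on_subset)
    moreover have "continuous_on K (\<lambda>y. \<phi> (fst y))"
      by (rule continuous_on_compose2[OF \<phi>cont[of T] continuous_on_fst[OF continuous_on_id]]) (auto simp: K_def)
    ultimately show ?thesis unfolding z_def by (intro continuous_intros) auto
  qed
  obtain y1 where y1: "y1 \<in> K" "\<And>y. y \<in> K \<Longrightarrow> z y \<le> z y1"
    using continuous_attains_sup[OF Kc Kne zc] by blast
  obtain t1 \<theta>1 where y1e: "y1 = (t1, \<theta>1)" by (cases y1)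
  have zmax: "z (s,\<theta>) \<le> z (t1,\<theta>1)" if "s \<in> {0..T}" for s \<theta>
  proof -
    obtain \<theta>' where \<theta>': "\<theta>' \<in> {0..2*pi}" "z (s,\<theta>') = z (s,\<theta>)"
      using periodic_reduce[of "\<lambda>\<theta>. z (s,\<theta>)"] zper by blast
    then show ?thesis using y1(2)[of "(s,\<theta>')"] that y1e unfolding K_def by auto
  qed
  have "z (t1,\<theta>1) \<ge> z (t0,\<theta>0)" using zmax[of t0 \<theta>0] t0 Tt0 by auto
  then have zpos: "z (t1,\<theta>1) > 0" using zt0 by simp
  have t1: "0 < t1" "t1 < T"
  proof -
    have "t1 \<in> {0..T}" using y1 y1e unfolding K_def by auto
    moreover have "t1 \<noteq> 0" using zpos z0 by auto
    moreover have "t1 \<noteq> T" using zpos zT[of \<theta>1] by auto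
    ultimately show "0 < t1" "t1 < T" by auto
  qed
  define f' where "f' s = ut (s,\<theta>1) - vt (s,\<theta>1) - \<epsilon> * b s + \<delta> * (2 * \<phi> s * b s)" for s
  have fd: "((\<lambda>s. z (s,\<theta>1)) has_real_derivative f' s) (at s)" if "s > 0" for s
  proof -
    have "((\<lambda>s. u (s,\<theta>1) - v (s,\<theta>1) - \<epsilon> * \<phi> s + \<delta> * (\<phi> s)^2) has_real_derivative f' s) (at s)"
      unfolding f'_def using Hu[OF that, of \<theta>1] Hv[OF that, of \<theta>1] \<phi>d[OF that]
      by (auto intro!: derivative_eq_intros)
    then show ?thesis unfolding z_def w_def by simp
  qed
  define f2 where "f2 = utt (t1,\<theta>1) - vtt (t1,\<theta>1) - \<epsilon> * db t1 + \<delta> * (2 * (b t1 * b t1 + \<phi> t1 * db t1))"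
  have f2d: "(f' has_real_derivative f2) (at t1)"
    unfolding f'_def f2_def using Hu[OF t1(1), of \<theta>1] Hv[OF t1(1), of \<theta>1] \<phi>d[OF t1(1)] db[OF t1(1)]
    by (auto intro!: derivative_eq_intros simp: algebra_simps)
  define d where "d = min t1 (T - t1)"
  have d: "d > 0" unfolding d_def using t1 by simp
  have H1: "((\<lambda>s. z (s,\<theta>1)) has_real_derivative f' s) (at s)" if "s \<in> {t1 - d<..<t1 + d}" for s
    using that fd unfolding d_def by auto
  have H2: "z (s,\<theta>1) \<le> z (t1,\<theta>1)" if "s \<in> {t1 - d<..<t1 + d}" for s
  proof -
    have "0 \<le> s \<and> s \<le> T" using that unfolding d_def by (auto simp: min_def split: if_splits)
    then show ?thesis using zmax[of s \<theta>1] by auto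
  qed
  note tres = second_deriv_max[OF d H1 f2d H2]
  define g' where "g' s = uh (t1,s) - vh (t1,s)" for s
  have gd: "((\<lambda>s. z (t1,s)) has_real_derivative g' s) (at s)" for s
  proof -
    have "((\<lambda>s. u (t1,s) - v (t1,s) - \<epsilon> * \<phi> t1 + \<delta> * (\<phi> t1)^2) has_real_derivative g' s) (at s)"
      unfolding g'_def using Hu[OF t1(1), of s] Hv[OF t1(1), of s]
      by (auto intro!: derivative_eq_intros)
    then show ?thesis unfolding z_def w_def by simp
  qed
  define g2 where "g2 = uhh (t1,\<theta>1) - vhh (t1,\<theta>1)"
  have g2d: "(g' has_real_derivative g2) (at \<theta>1)"
    unfolding g'_def g2_def using Hu[OF t1(1), of \<theta>1] Hv[OF t1(1), of \<theta>1]
    by (auto intro!: derivative_eq_intros)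
  have g2le: "g2 \<le> 0"
  proof (rule second_deriv_max(2)[OF zero_less_one _ g2d, where f="\<lambda>s. z (t1,s)"])
    fix s show "((\<lambda>s. z (t1,s)) has_real_derivative g' s) (at s)" by (rule gd)
    show "z (t1,s) \<le> z (t1,\<theta>1)" using zmax[of t1] t1 by auto
  qed
  have abd: "da t1 * b t1 + a t1 * db t1 = 0"
  proof -
    have "((\<lambda>s. a s * b s) has_real_derivative da t1 * b t1 + a t1 * db t1) (at t1)"
      using da[OF t1(1)] db[OF t1(1)] by (auto intro!: derivative_eq_intros)
    moreover have "((\<lambda>s. a s * b s) has_real_derivative 0) (at t1)"
    proof (rule has_field_derivative_transform_within_open[of "\<lambda>s. 1" _ _ "{0<..}"])
      show "((\<lambda>s. 1) has_real_derivative 0) (at t1)" by simp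
    qed (use t1 ab in auto)
    ultimately show ?thesis by (rule DERIV_unique)
  qed
  have eqn: "da t1 * (ut (t1,\<theta>1) - vt (t1,\<theta>1)) + a t1 * (utt (t1,\<theta>1) - vtt (t1,\<theta>1)) + b t1 * g2 = 0"
    using Hu[OF t1(1), of \<theta>1] Hv[OF t1(1), of \<theta>1] unfolding g2_def by (simp add: algebra_simps)
  have "da t1 * f' t1 + a t1 * f2 + b t1 * g2 =
      (da t1 * (ut (t1,\<theta>1) - vt (t1,\<theta>1)) + a t1 * (utt (t1,\<theta>1) - vtt (t1,\<theta>1)) + b t1 * g2)
      - \<epsilon> * (da t1 * b t1 + a t1 * db t1) + 2 * \<delta> * \<phi> t1 * (da t1 * b t1 + a t1 * db t1)
      + 2 * \<delta> * (a t1 * b t1) * b t1"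
    unfolding f'_def f2_def by (simp add: algebra_simps)
  also have "\<dots> = 2 * \<delta> * b t1" using eqn abd ab[OF t1(1)] by simp
  finally have pos: "da t1 * f' t1 + a t1 * f2 + b t1 * g2 > 0" using \<delta> bpos[of t1] t1 by simp
  have "a t1 * f2 \<le> 0" using apos[OF t1(1)] tres(2) by (simp add: mult_nonneg_nonpos)
  moreover have "b t1 * g2 \<le> 0" using bpos[of t1] t1 g2le by (simp add: mult_nonneg_nonpos)
  ultimately show False using pos tres(1) by simp
qed

lemma sqrt_quot_diff:
  assumes "(f has_real_derivative f') (at t)" "(g has_real_derivative g') (at t)" "f t > 0" "g t > 0"
  shows "(\<lambda>s. sqrt (f s) / sqrt (g s)) differentiable (at t)"
proof -
  have "\<exists>D. ((\<lambda>s. sqrt (f s) / sqrt (g s)) has_real_derivative D) (at t)"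
    using assms by (intro exI) (auto intro!: derivative_eq_intros)
  then show ?thesis using real_differentiable_def by blast
qed

lemma sq_alg1: assumes "x > 0" "y > 0" shows "y / sqrt (x * y) = sqrt y / sqrt x"
proof -
  have "y = sqrt y * sqrt y" using assms by simp
  then show ?thesis using assms by (simp add: real_sqrt_mult field_simps)
qed

lemma mink_cont:
  "continuous_on S f \<Longrightarrow> continuous_on S g \<Longrightarrow> continuous_on S (\<lambda>x. mink (f x) (g x))"
  by (rule bounded_bilinear.continuous_on[OF bb_mink])

lemma at_pos: "t > 0 \<Longrightarrow> at t within {0::real..} = at t"
  by (intro at_within_interior) simp

lemma vd_within_pos:
  assumes "f differentiable (at t within {0..})" "t > (0::real)"
  shows "(f has_vector_derivative vector_derivative f (at t within {0..})) (at t)"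
  using assms vector_derivative_works[of f "at t within {0..}"] at_pos[OF assms(2)] by simp

lemma zero_on_pos_deriv:
  fixes h :: "real \<Rightarrow> real"
  assumes "(h has_vector_derivative D) (at t)" "t > 0" "\<And>s. s > 0 \<Longrightarrow> h s = 0"
  shows "D = 0"
proof -
  have "((\<lambda>s. 0) has_vector_derivative D) (at t)"
    by (rule has_vector_derivative_transform_within_open[OF assms(1), of "{0<..}"]) (use assms in auto)
  then show ?thesis by (rule vd_const_unique)
qed

lemma harmonic_data:
  fixes F :: "real \<times> real \<Rightarrow> real^4" and u :: "real \<times> real \<Rightarrow> real" and a b da :: "real \<Rightarrow> real"
  assumes h: "harmonic_on_E F u"
    and flt: "\<And>s \<theta>. s > 0 \<Longrightarrow> lb_flux_t F u (s,\<theta>) = a s * dt u (s,\<theta>)"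
    and fl\<theta>: "\<And>s \<theta>. s > 0 \<Longrightarrow> lb_flux_\<theta> F u (s,\<theta>) = b s * d\<theta> u (s,\<theta>)"
    and da: "\<And>t. t > 0 \<Longrightarrow> (a has_real_derivative da t) (at t)"
    and t: "t > 0"
  shows "((\<lambda>s. u (s,\<theta>)) has_real_derivative dt u (t,\<theta>)) (at t) \<and>
        ((\<lambda>s. dt u (s,\<theta>)) has_real_derivative dt (dt u) (t,\<theta>)) (at t) \<and>
        ((\<lambda>s. u (t,s)) has_real_derivative d\<theta> u (t,\<theta>)) (at \<theta>) \<and>
        ((\<lambda>s. d\<theta> u (t,s)) has_real_derivative d\<theta> (d\<theta> u) (t,\<theta>)) (at \<theta>) \<and>
        da t * dt u (t,\<theta>) + a t * dt (dt u) (t,\<theta>) + b t * d\<theta> (d\<theta> u) (t,\<theta>) = 0"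
proof -
  have xi: "(t,\<theta>) \<in> interior_E" using t by (simp add: interior_E_def)
  have C2: "Ck_on (Suc (Suc 0)) interior_E u" using h unfolding harmonic_on_E_def by (simp add: numeral_2_eq_2)
  then have c1: "(\<lambda>s. u (s,\<theta>)) differentiable (at t)" "(\<lambda>s. u (t,s)) differentiable (at \<theta>)"
    and c2: "(\<lambda>s. dt u (s,\<theta>)) differentiable (at t)" "(\<lambda>s. d\<theta> u (t,s)) differentiable (at \<theta>)"
    using xi by (auto simp del: Ck_on.simps(1))
  have r1: "((\<lambda>s. u (s,\<theta>)) has_real_derivative dt u (t,\<theta>)) (at t)"
    using c1(1) unfolding dt_def has_real_derivative_iff_has_vector_derivative by (simp add: vector_derivative_works[symmetric])
  have r2: "((\<lambda>s. dt u (s,\<theta>)) has_real_derivative dt (dt u) (t,\<theta>)) (at t)"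
    using c2(1) unfolding dt_def[of "dt u"] has_real_derivative_iff_has_vector_derivative by (simp add: vector_derivative_works[symmetric])
  have r3: "((\<lambda>s. u (t,s)) has_real_derivative d\<theta> u (t,\<theta>)) (at \<theta>)"
    using c1(2) unfolding d\<theta>_def has_real_derivative_iff_has_vector_derivative by (simp add: vector_derivative_works[symmetric])
  have r4: "((\<lambda>s. d\<theta> u (t,s)) has_real_derivative d\<theta> (d\<theta> u) (t,\<theta>)) (at \<theta>)"
    using c2(2) unfolding d\<theta>_def[of "d\<theta> u"] has_real_derivative_iff_has_vector_derivative by (simp add: vector_derivative_works[symmetric])
  have eq: "dt (lb_flux_t F u) (t,\<theta>) + d\<theta> (lb_flux_\<theta> F u) (t,\<theta>) = 0"
    using h xi unfolding harmonic_on_E_def by blast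
  have "((\<lambda>s. a s * dt u (s,\<theta>)) has_real_derivative da t * dt u (t,\<theta>) + a t * dt (dt u) (t,\<theta>)) (at t)"
    using da[OF t] r2 by (auto intro!: derivative_eq_intros)
  then have "((\<lambda>s. lb_flux_t F u (s,\<theta>)) has_real_derivative da t * dt u (t,\<theta>) + a t * dt (dt u) (t,\<theta>)) (at t)"
    by (rule has_field_derivative_transform_within_open[of _ _ _ "{0<..}"]) (use t flt in auto)
  then have e1: "dt (lb_flux_t F u) (t,\<theta>) = da t * dt u (t,\<theta>) + a t * dt (dt u) (t,\<theta>)"
    unfolding dt_def has_real_derivative_iff_has_vector_derivative by (simp add: vector_derivative_at)
  have "((\<lambda>s. b t * d\<theta> u (t,s)) has_real_derivative b t * d\<theta> (d\<theta> u) (t,\<theta>)) (at \<theta>)"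
    using r4 by (auto intro!: derivative_eq_intros)
  moreover have "(\<lambda>s. lb_flux_\<theta> F u (t,s)) = (\<lambda>s. b t * d\<theta> u (t,s))" using fl\<theta> t by auto
  ultimately have e2: "d\<theta> (lb_flux_\<theta> F u) (t,\<theta>) = b t * d\<theta> (d\<theta> u) (t,\<theta>)"
    unfolding d\<theta>_def has_real_derivative_iff_has_vector_derivative by (simp add: vector_derivative_at)
  show ?thesis using r1 r2 r3 r4 eq e1 e2 by simp
qed

theorem corollaryD:
  fixes \<sigma> P :: "(real^4) set"
    and \<beta> :: "real \<Rightarrow> real^4"
    and R :: "real \<Rightarrow> real^4 \<Rightarrow> real^4"
  assumes geod: "hgeodesic \<sigma>"
    and plane: "hplane P" and sub: "\<sigma> \<subseteq> P"
    and curve_in: "\<forall>t\<ge>0. \<beta> t \<in> P"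
    and smooth: "smooth_halfline \<beta>"
    and regular: "\<forall>t\<ge>0. vector_derivative \<beta> (at t within {0..}) \<noteq> 0"
    and infinite_length:
      "set_nn_integral lborel {0..}
         (\<lambda>t. ennreal (sqrt (mink (vector_derivative \<beta> (at t within {0..}))
                                  (vector_derivative \<beta> (at t within {0..}))))) = \<infinity>"
    and avoids: "\<forall>t\<ge>0. \<beta> t \<notin> \<sigma>"
    and rot: "angle_param \<sigma> R"
    and cpt: "\<exists>K. compact K \<and> K \<subseteq> H3 \<and> (\<forall>t\<ge>0. \<forall>\<theta>. R \<theta> (\<beta> t) \<in> K)"
  shows "parabolic_end (rev_imm R \<beta>)"
proof -
  note rb = rot_basic[OF rot]
  obtain A where linA: "linear A" and dA: "\<And>x \<theta>. ((\<lambda>s. R s x) has_vector_derivative R \<theta> (A x)) (at \<theta>)"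
    using group_deriv[OF rb(2) rb(5) rb(1) rb(6)] by blast
  obtain W where W: "subspace W" "P = H3 \<inter> W" and WA: "\<forall>p\<in>P - \<sigma>. A p \<noteq> 0 \<and> (\<forall>w\<in>W. mink (A p) w = 0)"
    using geometry(1)[OF geod plane sub rot linA dA] by blast
  have skew: "\<And>u v. mink (A u) v = - mink u (A v)" using geometry(2)[OF geod plane sub rot linA dA] .
  have Ax_orth: "mink x (A x) = 0" for x using skew[of x x] mink_sym[of x "A x"] by simp
  define \<beta>' where "\<beta>' t = vector_derivative \<beta> (at t within {0..})" for t
  define \<beta>'' where "\<beta>'' t = vector_derivative \<beta>' (at t within {0..})" for t
  have Ck2: "Ck_halfline (Suc (Suc 0)) \<beta>" and Ck1: "Ck_halfline (Suc 0) \<beta>" and Ck0: "Ck_halfline 0 \<beta>"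
    using smooth unfolding smooth_halfline_def by blast+
  have bdiff: "\<And>t. t \<ge> 0 \<Longrightarrow> \<beta> differentiable (at t within {0..})"
    and b'diff: "\<And>t. t \<ge> 0 \<Longrightarrow> \<beta>' differentiable (at t within {0..})"
    using Ck2 unfolding \<beta>'_def by auto
  have b'cont: "continuous_on {0..} \<beta>'" using Ck1 unfolding \<beta>'_def by simp
  have bcont: "continuous_on {0..} \<beta>" using Ck0 by simp
  have bvd: "(\<beta> has_vector_derivative \<beta>' t) (at t)" if "t > 0" for t
    unfolding \<beta>'_def using vd_within_pos[OF bdiff that] that by simp
  have b'vd: "(\<beta>' has_vector_derivative \<beta>'' t) (at t)" if "t > 0" for t
    unfolding \<beta>''_def using vd_within_pos[OF b'diff that] that by simp
  have \<beta>P: "\<beta> t \<in> P - \<sigma>" if "t \<ge> 0" for t using curve_in avoids that by auto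
  have \<beta>H: "\<beta> t \<in> H3" and \<beta>W: "\<beta> t \<in> W" if "t \<ge> 0" for t using \<beta>P[OF that] W by auto
  define g1 where "g1 t = mink (\<beta>' t) (\<beta>' t)" for t
  define g2 where "g2 t = mink (A (\<beta> t)) (A (\<beta> t))" for t
  have g2pos: "g2 t > 0" if "t \<ge> 0" for t
    unfolding g2_def using spacelike_orth[OF H3_neg[OF \<beta>H[OF that]] Ax_orth] WA \<beta>P[OF that] by blast
  have orth_pos: "mink (\<beta> t) (\<beta>' t) = 0" if "t > 0" for t
  proof -
    have "((\<lambda>s. mink (\<beta> s) (\<beta> s) + 1) has_vector_derivative (mink (\<beta> t) (\<beta>' t) + mink (\<beta>' t) (\<beta> t) + 0)) (at t)"
      by (intro has_vector_derivative_add mink_has_vd bvd that has_vector_derivative_const)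
    moreover have "mink (\<beta> s) (\<beta> s) + 1 = 0" if "s > 0" for s using \<beta>H[of s] that by (simp add: H3_def)
    ultimately have "mink (\<beta> t) (\<beta>' t) + mink (\<beta>' t) (\<beta> t) + 0 = 0" by (rule zero_on_pos_deriv[OF _ that])
    then show ?thesis by (simp add: mink_sym)
  qed
  have orth0: "mink (\<beta> t) (\<beta>' t) = 0" if "t \<ge> 0" for t
  proof (cases "t = 0")
    case False then show ?thesis using orth_pos that by simp
  next
    case True
    have kc: "continuous_on {0..} (\<lambda>s. mink (\<beta> s) (\<beta>' s))" by (rule mink_cont[OF bcont b'cont])
    have "(\<lambda>n. 1 / (real n + 1)) \<longlonglongrightarrow> 0" using LIMSEQ_inverse_real_of_nat by (simp add: inverse_eq_divide add.commute)
    then have "(\<lambda>n. mink (\<beta> (1 / (real n + 1))) (\<beta>' (1 / (real n + 1)))) \<longlonglongrightarrow> mink (\<beta> 0) (\<beta>' 0)"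
      by (rule continuous_on_tendsto_compose[OF kc]) auto
    moreover have "(\<lambda>n. mink (\<beta> (1 / (real n + 1))) (\<beta>' (1 / (real n + 1)))) = (\<lambda>n. 0)"
      using orth_pos by simp
    ultimately show ?thesis using True LIMSEQ_unique tendsto_const by metis
  qed
  have g1pos: "g1 t > 0" if "t \<ge> 0" for t
    unfolding g1_def using spacelike_orth[OF H3_neg[OF \<beta>H[OF that]] orth0[OF that]] regular that
    unfolding \<beta>'_def by blast
  have g12: "mink (A (\<beta> t)) (\<beta>' t) = 0" if "t > 0" for t
  proof -
    have "((\<lambda>s. mink (A (\<beta> t)) (\<beta> s)) has_vector_derivative (mink (A (\<beta> t)) (\<beta>' t) + mink 0 (\<beta> t))) (at t)"
      by (intro mink_has_vd bvd that has_vector_derivative_const)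
    moreover have "mink (A (\<beta> t)) (\<beta> s) = 0" if "s > 0" for s using WA \<beta>P[of t] \<beta>W[of s] \<open>t > 0\<close> that by auto
    ultimately have "mink (A (\<beta> t)) (\<beta>' t) + mink 0 (\<beta> t) = 0" by (rule zero_on_pos_deriv[OF _ that])
    then show ?thesis by simp
  qed
  have linAb: "bounded_linear A" using linA by (simp add: linear_conv_bounded_linear)
  have g1cont: "continuous_on {0..} g1" unfolding g1_def by (rule mink_cont[OF b'cont b'cont])
  have Abcont: "continuous_on {0..} (\<lambda>t. A (\<beta> t))"
    using continuous_on_compose[OF bcont linear_continuous_on[OF linAb]] by (simp add: o_def)
  have g2cont: "continuous_on {0..} g2" unfolding g2_def by (rule mink_cont[OF Abcont Abcont])
  have g1d: "(g1 has_real_derivative (mink (\<beta>' t) (\<beta>'' t) + mink (\<beta>'' t) (\<beta>' t))) (at t)" if "t > 0" for t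
    unfolding g1_def has_real_derivative_iff_has_vector_derivative by (intro mink_has_vd b'vd that)
  have Abd: "((\<lambda>s. A (\<beta> s)) has_vector_derivative A (\<beta>' t)) (at t)" if "t > 0" for t
    by (rule bounded_linear.has_vector_derivative[OF linAb bvd[OF that]])
  have g2d: "(g2 has_real_derivative (mink (A (\<beta> t)) (A (\<beta>' t)) + mink (A (\<beta>' t)) (A (\<beta> t)))) (at t)" if "t > 0" for t
    unfolding g2_def has_real_derivative_iff_has_vector_derivative by (intro mink_has_vd Abd that)
  define a where "a t = sqrt (g2 t) / sqrt (g1 t)" for t
  define b where "b t = sqrt (g1 t) / sqrt (g2 t)" for t
  have bpos: "b t > 0" if "t \<ge> 0" for t unfolding b_def using g1pos[of t] g2pos[of t] that by simp
  have apos: "a t > 0" if "t > 0" for t unfolding a_def using g1pos[of t] g2pos[of t] that by simp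
  have ab: "a t * b t = 1" if "t > 0" for t unfolding a_def b_def using g1pos[of t] g2pos[of t] that by simp
  have bc: "continuous_on {0..} b" unfolding b_def using g1cont g2cont g2pos
    by (intro continuous_intros) (auto dest: g2pos)
  have adiff: "a differentiable (at t)" if "t > 0" for t
  proof -
    have t0: "t \<ge> 0" using that by simp
    show ?thesis unfolding a_def[abs_def] by (rule sqrt_quot_diff[OF g2d[OF that] g1d[OF that] g2pos[OF t0] g1pos[OF t0]])
  qed
  have bdiff': "b differentiable (at t)" if "t > 0" for t
  proof -
    have t0: "t \<ge> 0" using that by simp
    show ?thesis unfolding b_def[abs_def] by (rule sqrt_quot_diff[OF g1d[OF that] g2d[OF that] g1pos[OF t0] g2pos[OF t0]])
  qed
  have da: "(a has_real_derivative deriv a t) (at t)" if "t > 0" for t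
    using adiff[OF that] DERIV_deriv_iff_real_differentiable by blast
  have db: "(b has_real_derivative deriv b t) (at t)" if "t > 0" for t
    using bdiff'[OF that] DERIV_deriv_iff_real_differentiable by blast
  \<comment> \<open>unboundedness of the conformal coordinate\<close>
  obtain K where K0: "compact K" "K \<subseteq> H3" "\<forall>t\<ge>0. \<forall>\<theta>. R \<theta> (\<beta> t) \<in> K"
    using cpt by blast
  have K: "compact K" "\<And>t. t \<ge> 0 \<Longrightarrow> \<beta> t \<in> K"
  proof -
    show "compact K" by (rule K0(1))
    fix t :: real assume "t \<ge> 0"
    then have "R 0 (\<beta> t) \<in> K" using K0(3) by blast
    then show "\<beta> t \<in> K" using rb(1) by simp
  qed
  have lc: "continuous_on K A" by (rule linear_continuous_on[OF linAb])
  have "compact ((\<lambda>x. mink (A x) (A x)) ` K)"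
    by (rule compact_continuous_image[OF mink_cont[OF lc lc] K(1)])
  then have "bounded ((\<lambda>x. mink (A x) (A x)) ` K)" by (rule compact_imp_bounded)
  then obtain Q0 where Q0': "\<forall>y\<in>(\<lambda>x. mink (A x) (A x)) ` K. \<bar>y\<bar> \<le> Q0" unfolding bounded_real by blast
  have Q0: "\<bar>mink (A x) (A x)\<bar> \<le> Q0" if "x \<in> K" for x using Q0' that by blast
  define Q where "Q = max Q0 1"
  have Q: "Q > 0" "\<And>t. t \<ge> 0 \<Longrightarrow> g2 t \<le> Q"
  proof -
    show "Q > 0" unfolding Q_def by simp
    fix t :: real assume "t \<ge> 0"
    then have "\<bar>mink (A (\<beta> t)) (A (\<beta> t))\<bar> \<le> Q0" by (rule Q0[OF K(2)])
    then show "g2 t \<le> Q" unfolding g2_def Q_def by linarith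
  qed
  have unb: "\<exists>T\<ge>0. integral {0..T} b > M" for M
  proof -
    have sc: "continuous_on {0..} (\<lambda>t. sqrt (g1 t))" using g1cont by (intro continuous_intros)
    have il: "set_nn_integral lborel {0..} (\<lambda>t. ennreal (sqrt (g1 t))) = \<infinity>"
      using infinite_length unfolding g1_def \<beta>'_def .
    obtain T where T: "T \<ge> 0" "integral {0..T} (\<lambda>t. sqrt (g1 t)) > M * sqrt Q"
    proof -
      have nn: "0 \<le> sqrt (g1 x)" if "x \<ge> 0" for x using g1pos[OF that] by simp
      have "\<exists>T\<ge>0. integral {0..T} (\<lambda>t. sqrt (g1 t)) > M * sqrt Q"
        by (rule length_unbounded[where f="\<lambda>t. sqrt (g1 t)", OF sc nn il])
      then show thesis using that by blast
    qed
    have "integral {0..T} (\<lambda>t. sqrt (g1 t) / sqrt Q) \<le> integral {0..T} b"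
    proof (rule integral_le)
      show "(\<lambda>t. sqrt (g1 t) / sqrt Q) integrable_on {0..T}"
      proof (rule integrable_continuous_real)
        have "continuous_on {0..T} (\<lambda>t. sqrt (g1 t))" by (rule continuous_on_subset[OF sc]) auto
        then show "continuous_on {0..T} (\<lambda>t. sqrt (g1 t) / sqrt Q)" by (intro continuous_on_divide continuous_on_const) (use Q in auto)
      qed
      show "b integrable_on {0..T}" by (rule integrable_continuous_real, rule continuous_on_subset[OF bc]) auto
      fix t assume "t \<in> {0..T}"
      then have t: "t \<ge> 0" by simp
      show "sqrt (g1 t) / sqrt Q \<le> b t" unfolding b_def using g1pos[OF t] g2pos[OF t] Q(2)[OF t] Q(1)
        by (intro divide_left_mono) (auto intro: real_sqrt_le_mono)
    qed
    moreover have "integral {0..T} (\<lambda>t. sqrt (g1 t) / sqrt Q) = integral {0..T} (\<lambda>t. sqrt (g1 t)) / sqrt Q"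
      by (simp add: divide_inverse integral_mult_left)
    moreover have "integral {0..T} (\<lambda>t. sqrt (g1 t)) / sqrt Q > M" using T(2) Q(1) by (simp add: field_simps)
    ultimately show ?thesis using T(1) by force
  qed
  define F where "F = rev_imm R \<beta>"
  have dtF: "dt F (s,\<theta>) = R \<theta> (\<beta>' s)" if "s > 0" for s \<theta>
  proof -
    have "((\<lambda>s. R \<theta> (\<beta> s)) has_vector_derivative R \<theta> (\<beta>' s)) (at s)"
    proof -
      have "bounded_linear (R \<theta>)" using rb(2)[of \<theta>] by (simp add: linear_conv_bounded_linear)
      then show ?thesis by (rule bounded_linear.has_vector_derivative[OF _ bvd[OF that]])
    qed
    then show ?thesis unfolding dt_def F_def rev_imm_def by (simp add: vector_derivative_at)
  qed
  have d\<theta>F: "d\<theta> F (s,\<theta>) = R \<theta> (A (\<beta> s))" for s \<theta>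
    unfolding d\<theta>_def F_def rev_imm_def using dA by (simp add: vector_derivative_at)
  have coef: "g11 F (s,\<theta>) = g1 s" "g22 F (s,\<theta>) = g2 s" "g12 F (s,\<theta>) = 0" "gdet F (s,\<theta>) = g1 s * g2 s"
    if "s > 0" for s \<theta>
  proof -
    show "g11 F (s,\<theta>) = g1 s" unfolding g11_def g1_def dtF[OF that] rb(3) ..
    show "g22 F (s,\<theta>) = g2 s" unfolding g22_def g2_def d\<theta>F rb(3) ..
    show "g12 F (s,\<theta>) = 0" unfolding g12_def dtF[OF that] d\<theta>F rb(3) using g12[OF that] by (simp add: mink_sym)
    then show "gdet F (s,\<theta>) = g1 s * g2 s" unfolding gdet_def
      using \<open>g11 F (s,\<theta>) = g1 s\<close> \<open>g22 F (s,\<theta>) = g2 s\<close> by simp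
  qed
  have flt: "lb_flux_t F u (s,\<theta>) = a s * dt u (s,\<theta>)" if "s > 0" for u s \<theta>
  proof -
    have s0: "s \<ge> 0" using that by simp
    have e: "g2 s / sqrt (g1 s * g2 s) = sqrt (g2 s) / sqrt (g1 s)" by (rule sq_alg1[OF g1pos[OF s0] g2pos[OF s0]])
    have "lb_flux_t F u (s,\<theta>) = (g2 s / sqrt (g1 s * g2 s)) * dt u (s,\<theta>)"
      unfolding lb_flux_t_def coef[OF that] by simp
    then show ?thesis unfolding e a_def .
  qed
  have fl\<theta>: "lb_flux_\<theta> F u (s,\<theta>) = b s * d\<theta> u (s,\<theta>)" if "s > 0" for u s \<theta>
  proof -
    have "g1 s / sqrt (g1 s * g2 s) = sqrt (g1 s) / sqrt (g2 s)"
      using sq_alg1[OF g2pos g1pos, of s s] that by (simp add: mult.commute)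
    moreover have "lb_flux_\<theta> F u (s,\<theta>) = (g1 s / sqrt (g1 s * g2 s)) * d\<theta> u (s,\<theta>)"
      unfolding lb_flux_\<theta>_def coef[OF that] by simp
    ultimately show ?thesis unfolding b_def by simp
  qed
  have le: "u x \<le> v x" if hu: "bdd_harmonic_E F u" and hv: "bdd_harmonic_E F v"
    and bd: "\<forall>\<theta>. u (0,\<theta>) = v (0,\<theta>)" and x: "fst x \<ge> 0" for u v x
  proof (rule max_principle[where a=a and b=b and da="deriv a" and db="deriv b"
        and ut="dt u" and utt="dt (dt u)" and uh="d\<theta> u" and uhh="d\<theta> (d\<theta> u)"
        and vt="dt v" and vtt="dt (dt v)" and vh="d\<theta> v" and vhh="d\<theta> (d\<theta> v)"])
    show "\<And>t. t \<ge> 0 \<Longrightarrow> b t > 0" by (rule bpos)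
    show "\<And>t. t > 0 \<Longrightarrow> a t > 0" by (rule apos)
    show "\<And>t. t > 0 \<Longrightarrow> a t * b t = 1" by (rule ab)
    show "continuous_on {0..} b" by (rule bc)
    show "\<And>t. t > 0 \<Longrightarrow> (a has_real_derivative deriv a t) (at t)" by (rule da)
    show "\<And>t. t > 0 \<Longrightarrow> (b has_real_derivative deriv b t) (at t)" by (rule db)
    show "\<And>M. \<exists>T\<ge>0. integral {0..T} b > M" by (rule unb)
    show "\<And>t \<theta>. t > 0 \<Longrightarrow> ((\<lambda>s. u (s,\<theta>)) has_real_derivative dt u (t,\<theta>)) (at t) \<and>
        ((\<lambda>s. dt u (s,\<theta>)) has_real_derivative dt (dt u) (t,\<theta>)) (at t) \<and>
        ((\<lambda>s. u (t,s)) has_real_derivative d\<theta> u (t,\<theta>)) (at \<theta>) \<and>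
        ((\<lambda>s. d\<theta> u (t,s)) has_real_derivative d\<theta> (d\<theta> u) (t,\<theta>)) (at \<theta>) \<and>
        deriv a t * dt u (t,\<theta>) + a t * dt (dt u) (t,\<theta>) + b t * d\<theta> (d\<theta> u) (t,\<theta>) = 0"
    proof -
      have "harmonic_on_E F u" using hu unfolding bdd_harmonic_E_def by blast
      then show "\<And>t \<theta>. t > 0 \<Longrightarrow> ?thesis t \<theta>" by (rule harmonic_data[OF _ flt fl\<theta> da])
    qed
    show "\<And>t \<theta>. t > 0 \<Longrightarrow> ((\<lambda>s. v (s,\<theta>)) has_real_derivative dt v (t,\<theta>)) (at t) \<and>
        ((\<lambda>s. dt v (s,\<theta>)) has_real_derivative dt (dt v) (t,\<theta>)) (at t) \<and>
        ((\<lambda>s. v (t,s)) has_real_derivative d\<theta> v (t,\<theta>)) (at \<theta>) \<and>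
        ((\<lambda>s. d\<theta> v (t,s)) has_real_derivative d\<theta> (d\<theta> v) (t,\<theta>)) (at \<theta>) \<and>
        deriv a t * dt v (t,\<theta>) + a t * dt (dt v) (t,\<theta>) + b t * d\<theta> (d\<theta> v) (t,\<theta>) = 0"
    proof -
      have "harmonic_on_E F v" using hv unfolding bdd_harmonic_E_def by blast
      then show "\<And>t \<theta>. t > 0 \<Longrightarrow> ?thesis t \<theta>" by (rule harmonic_data[OF _ flt fl\<theta> da])
    qed
    show "\<And>t \<theta>. u (t, \<theta> + 2*pi) = u (t,\<theta>)" using hu unfolding bdd_harmonic_E_def by blast
    show "\<And>t \<theta>. v (t, \<theta> + 2*pi) = v (t,\<theta>)" using hv unfolding bdd_harmonic_E_def by blast
    show "continuous_on {x. fst x \<ge> 0} u" using hu unfolding bdd_harmonic_E_def by blast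
    show "continuous_on {x. fst x \<ge> 0} v" using hv unfolding bdd_harmonic_E_def by blast
    show "\<exists>B. \<forall>x. fst x \<ge> 0 \<longrightarrow> \<bar>u x\<bar> \<le> B" using hu unfolding bdd_harmonic_E_def by blast
    show "\<exists>B. \<forall>x. fst x \<ge> 0 \<longrightarrow> \<bar>v x\<bar> \<le> B" using hv unfolding bdd_harmonic_E_def by blast
    show "\<And>\<theta>. u (0,\<theta>) = v (0,\<theta>)" using bd by blast
    show "fst x \<ge> 0" by (rule x)
  qed
  show ?thesis unfolding parabolic_end_def F_def[symmetric]
    using le by (metis order_antisym)
qed

end
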